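(* Let $G$ be a modular noetherian right $\ell$-group in which the meet $s^{-1} := \bigwedge X(G^-)$ exists. Then the join of all elements covering $e$ exists and equals $s$: \[ s = \bigvee \{ g \in G : g \succ e\}. \] Moreover, the interval $[e,s]$ is a modular geometric lattice.
   Context: A right $\ell$-group is a group $G$ (identity $e$) with a right-invariant partial order making $G$ a lattice. It is modular if the lattice is modular. It is noetherian if for each $g$ the set $\{h \geq g\}$ satisfies the descending chain condition and the set $\{h \leq g\}$ satisfies the ascending chain condition. $G^- = \{g \leq e\}$ and $X(G^-)$ is the set of elements covered by $e$. The notation $g \succ e$ means that $g$ covers $e$. A modular lattice of finite length is geometric if every element is the join of a finite (possibly empty) set of atoms. *)

theory Defs
  imports Main
begin

text \<open>A right l-group is modelled as a type that is simultaneously a (not necessarily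
commutative) group, written additively (identity 0 = e, inverse uminus, product +),
and a lattice (order \<le>, meet inf, join sup), with the order right-invariant.\<close>

definition right_invariant :: "('a::{group_add,lattice}) itself \<Rightarrow> bool" where
  "right_invariant _ \<longleftrightarrow> (\<forall>x y z::'a. x \<le> y \<longrightarrow> x + z \<le> y + z)"

definition modular_on :: "('a::lattice) set \<Rightarrow> bool" where
  "modular_on A \<longleftrightarrow> (\<forall>x\<in>A. \<forall>y\<in>A. \<forall>z\<in>A. x \<le> z \<longrightarrow> sup x (inf y z) = inf (sup x y) z)"

definition noetherian :: "('a::order) itself \<Rightarrow> bool" where
  "noetherian _ \<longleftrightarrow> (\<forall>g::'a. wfP (\<lambda>x y. g \<le> x \<and> x < y) \<and> wfP (\<lambda>x y. x \<le> g \<and> y < x))"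

definition covers :: "'a::order \<Rightarrow> 'a \<Rightarrow> bool" where
  "covers g h \<longleftrightarrow> h < g \<and> \<not> (\<exists>k. h < k \<and> k < g)"

definition is_lub_in :: "'a::order set \<Rightarrow> 'a set \<Rightarrow> 'a \<Rightarrow> bool" where
  "is_lub_in A S x \<longleftrightarrow> x \<in> A \<and> (\<forall>y\<in>S. y \<le> x) \<and> (\<forall>z\<in>A. (\<forall>y\<in>S. y \<le> z) \<longrightarrow> x \<le> z)"

definition is_glb_in :: "'a::order set \<Rightarrow> 'a set \<Rightarrow> 'a \<Rightarrow> bool" where
  "is_glb_in A S x \<longleftrightarrow> x \<in> A \<and> (\<forall>y\<in>S. x \<le> y) \<and> (\<forall>z\<in>A. (\<forall>y\<in>S. z \<le> y) \<longrightarrow> z \<le> x)"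

definition X_neg :: "'a::{group_add,order} set" where
  "X_neg = {g. covers 0 g}"

definition finite_length :: "'a::order set \<Rightarrow> bool" where
  "finite_length A \<longleftrightarrow> (\<exists>n::nat. \<forall>C \<subseteq> A. (\<forall>x\<in>C. \<forall>y\<in>C. x \<le> y \<or> y \<le> x) \<longrightarrow> finite C \<and> card C \<le> n)"

definition modular_geometric_lattice :: "'a::lattice set \<Rightarrow> 'a \<Rightarrow> bool" where
  "modular_geometric_lattice A b \<longleftrightarrow>
     b \<in> A \<and> (\<forall>x\<in>A. b \<le> x) \<and>
     (\<forall>x\<in>A. \<forall>y\<in>A. sup x y \<in> A \<and> inf x y \<in> A) \<and>
     modular_on A \<and> finite_length A \<and>
     (\<forall>x\<in>A. \<exists>F. finite F \<and> F \<subseteq> {a\<in>A. b < a \<and> \<not> (\<exists>k\<in>A. b < k \<and> k < a)} \<and> is_lub_in A F x)"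

end

theory Submission
  imports Defs
begin

primrec joinl :: "('a::{zero,sup}) list \<Rightarrow> 'a" where
  "joinl [] = 0" | "joinl (a#l) = sup a (joinl l)"

primrec meetl :: "('a::lattice) \<Rightarrow> 'a list \<Rightarrow> 'a" where
  "meetl t [] = t" | "meetl t (a#l) = inf a (meetl t l)"

lemma meetl_le_iff: "z \<le> meetl t l \<longleftrightarrow> z \<le> t \<and> (\<forall>y\<in>set l. z \<le> y)"
  by (induction l) auto

lemma joinl_ub: "b \<in> set l \<Longrightarrow> b \<le> (joinl l :: 'a::{zero,lattice})"
  by (induction l) (auto intro: le_supI2)

lemma joinl_le: "0 \<le> z \<Longrightarrow> \<forall>b\<in>set l. b \<le> z \<Longrightarrow> joinl l \<le> (z :: 'a::{zero,lattice})"
  by (induction l) auto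

lemma joinl_ge0: "\<forall>b\<in>set l. 0 \<le> b \<Longrightarrow> 0 \<le> (joinl l :: 'a::{zero,lattice})"
  by (induction l) (auto intro: le_supI2)

definition Sset :: "('a::{zero,lattice}) list \<Rightarrow> 'a \<Rightarrow> nat set" where
  "Sset bs x = {i. i < length bs \<and> \<not> bs!i \<le> sup x (joinl (drop (Suc i) bs))}"

lemma Sset_fin: "Sset bs x \<subseteq> {..<length bs}"
  unfolding Sset_def by auto

lemma Sset_anti: "x \<le> y \<Longrightarrow> Sset bs y \<subseteq> Sset bs x"
  unfolding Sset_def by (auto intro: order_trans sup_mono)

locale rlg =
  fixes s :: "'a::{group_add,lattice}"
  assumes RI: "right_invariant TYPE('a)"
    and MOD: "modular_on (UNIV :: 'a set)"
    and NOE: "noetherian TYPE('a)"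
    and GLB: "is_glb_in UNIV X_neg (- s)"
begin

lemma mono_r: "x \<le> y \<Longrightarrow> x + z \<le> y + (z::'a)"
  using RI unfolding right_invariant_def by blast

lemma le_r_iff: "x + z \<le> y + z \<longleftrightarrow> x \<le> (y::'a)"
proof
  assume "x + z \<le> y + z"
  then have "x + z + - z \<le> y + z + - z" by (rule mono_r)
  then show "x \<le> y" by (simp add: add.assoc)
qed (rule mono_r)

lemma less_r_iff: "x + z < y + z \<longleftrightarrow> x < (y::'a)"
  by (simp add: less_le_not_le le_r_iff)

lemma covers_r: "covers (a + g) (b + g) \<longleftrightarrow> covers a (b::'a)"
proof -
  have "(\<exists>k. b + g < k \<and> k < a + g) \<longleftrightarrow> (\<exists>k. b < k \<and> k < a)"
  proof
    assume "\<exists>k. b + g < k \<and> k < a + g"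
    then obtain k where "b + g < k" "k < a + g" by blast
    then have "b + g < (k + - g) + g" "(k + - g) + g < a + g" by (simp_all add: add.assoc)
    then show "\<exists>k. b < k \<and> k < a" unfolding less_r_iff by blast
  next
    assume "\<exists>k. b < k \<and> k < a"
    then obtain k where "b < k" "k < a" by blast
    then have "b + g < k + g" "k + g < a + g" by (simp_all add: less_r_iff)
    then show "\<exists>k. b + g < k \<and> k < a + g" by blast
  qed
  then show ?thesis unfolding covers_def less_r_iff by blast
qed

lemma modl: "x \<le> z \<Longrightarrow> sup x (inf y z) = inf (sup x y) (z::'a)"
  using MOD unfolding modular_on_def by blast

lemma min_ex:
  assumes "q \<in> Q" "\<forall>x\<in>Q. g \<le> x"
  shows "\<exists>m\<in>Q. \<forall>x\<in>Q. \<not> x < (m::'a)"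
proof -
  have "wfP (\<lambda>x y. g \<le> x \<and> x < y)" using NOE unfolding noetherian_def by blast
  then obtain z where "z \<in> Q" "\<forall>y. g \<le> y \<and> y < z \<longrightarrow> y \<notin> Q"
    using assms(1) unfolding wfp_eq_minimal by metis
  then show ?thesis using assms(2) by blast
qed

lemma max_ex:
  assumes "q \<in> Q" "\<forall>x\<in>Q. x \<le> g"
  shows "\<exists>m\<in>Q. \<forall>x\<in>Q. \<not> m < (x::'a)"
proof -
  have "wfP (\<lambda>x y. x \<le> g \<and> y < x)" using NOE unfolding noetherian_def by blast
  then obtain z where "z \<in> Q" "\<forall>y. y \<le> g \<and> z < y \<longrightarrow> y \<notin> Q"
    using assms(1) unfolding wfp_eq_minimal by metis
  then show ?thesis using assms(2) by blast
qed

lemma X_glb1: "x \<in> X_neg \<Longrightarrow> - s \<le> x" using GLB unfolding is_glb_in_def by blast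
lemma X_glb2: "(\<And>x. x \<in> X_neg \<Longrightarrow> z \<le> x) \<Longrightarrow> z \<le> - s" using GLB unfolding is_glb_in_def by blast

lemma triv: "(X_neg::'a set) = {} \<Longrightarrow> (z::'a) = 0"
proof -
  assume "(X_neg::'a set) = {}"
  then have all: "\<And>w. w \<le> - s" by (intro X_glb2) simp
  have "-s + z \<le> -s" by (rule all)
  moreover have "-s + - z \<le> -s" by (rule all)
  then have "-s + - z + z \<le> -s + z" by (rule mono_r)
  then have "-s \<le> -s + z" by (simp add: add.assoc)
  ultimately have "-s + z = -s" by (rule order_antisym)
  then have "-s + z = -s + 0" by (simp only: add_0_right)
  then show "z = 0" by (rule add_left_imp_eq)
qed

lemma s0: "0 \<le> s"
proof (cases "(X_neg::'a set) = {}")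
  case True then show ?thesis using triv[OF True, of s] by simp
next
  case False
  then obtain x :: 'a where x: "x \<in> X_neg" by blast
  then have "x < 0" unfolding X_neg_def covers_def by simp
  with X_glb1[OF x] have "-s \<le> 0" by simp
  then have "-s + s \<le> 0 + s" by (rule mono_r)
  then show ?thesis by simp
qed

lemma lowcov_ge: "covers s y \<Longrightarrow> 0 \<le> y"
proof -
  assume "covers s y"
  then have "covers (s + - s) (y + - s)" by (simp only: covers_r)
  then have "y + - s \<in> X_neg" unfolding X_neg_def by simp
  then have "-s \<le> y + - s" by (rule X_glb1)
  then have "-s + s \<le> y + - s + s" by (rule mono_r)
  then show ?thesis by (simp add: add.assoc)
qed

lemma glb_low: "(\<And>y. covers s y \<Longrightarrow> z \<le> y) \<Longrightarrow> z \<le> 0"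
proof -
  assume H: "\<And>y. covers s y \<Longrightarrow> z \<le> y"
  have "z + - s \<le> - s"
  proof (rule X_glb2)
    fix x :: 'a assume "x \<in> X_neg"
    then have "covers 0 x" unfolding X_neg_def by simp
    then have "covers (0 + s) (x + s)" by (simp only: covers_r)
    then have "z \<le> x + s" using H by simp
    then have "z + - s \<le> x + s + - s" by (rule mono_r)
    then show "z + - s \<le> x" by (simp add: add.assoc)
  qed
  then have "z + - s + s \<le> - s + s" by (rule mono_r)
  then show ?thesis by (simp add: add.assoc)
qed

lemma covlow: "covers u z \<Longrightarrow> - s + u \<le> z"
proof -
  assume "covers u z"
  then have "covers (u + - u) (z + - u)" by (simp only: covers_r)
  then have "z + - u \<in> X_neg" unfolding X_neg_def by simp
  then have "-s \<le> z + - u" by (rule X_glb1)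
  then have "-s + u \<le> z + - u + u" by (rule mono_r)
  then show ?thesis by (simp add: add.assoc)
qed

lemma atom_inf: "covers (b::'a) 0 \<Longrightarrow> 0 \<le> y \<Longrightarrow> \<not> b \<le> y \<Longrightarrow> inf b y = 0"
proof -
  assume a: "covers b 0" "0 \<le> y" "\<not> b \<le> y"
  have "0 \<le> inf b y" using a unfolding covers_def by (auto intro: le_infI order_less_imp_le)
  moreover have "inf b y \<noteq> b" using a(3) by (metis inf.absorb_iff1)
  then have "inf b y < b" by (simp add: order_less_le)
  ultimately show ?thesis using a(1) unfolding covers_def by (auto simp: order_le_less)
qed

lemma atoms_le_s:
  assumes b: "covers b 0"
  shows "b \<le> s"
proof (rule ccontr)
  assume nb: "\<not> b \<le> s"
  define u where "u = sup b s"
  have b0: "0 < b" using b unfolding covers_def by simp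
  have ib: "inf b s = 0" using atom_inf[OF b s0 nb] .
  have su: "s < u" using nb unfolding u_def by (metis sup.cobounded1 sup.cobounded2 order_less_le)
  have cov_su: "covers u s"
    unfolding covers_def
  proof (intro conjI su notI)
    assume "\<exists>k. s < k \<and> k < u"
    then obtain k where k: "s < k" "k < u" by blast
    have nbk: "\<not> b \<le> k"
    proof
      assume "b \<le> k"
      then have "u \<le> k" unfolding u_def using k(1) by simp
      then show False using k(2) by simp
    qed
    have k0: "0 \<le> k" using s0 k(1) by simp
    have "inf b k = 0" using atom_inf[OF b k0 nbk] .
    moreover have "sup s (inf b k) = inf (sup s b) k" by (rule modl[OF order_less_imp_le[OF k(1)]])
    ultimately have "s = inf u k" unfolding u_def using s0 by (simp add: sup.commute sup.absorb2)
    then have "s = k" using k(2) by (simp add: inf.absorb2)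
    then show False using k(1) by simp
  qed
  have cov_y: "covers u (sup y b)" if y: "covers s y" for y
  proof -
    have y0: "0 \<le> y" using lowcov_ge[OF y] .
    have ys: "y < s" using y unfolding covers_def by simp
    have "sup y (inf b s) = inf (sup y b) s" by (rule modl[OF order_less_imp_le[OF ys]])
    then have iy: "inf (sup y b) s = y" using ib y0 by (simp add: sup.absorb1)
    have le: "sup y b \<le> u" unfolding u_def using ys by (simp add: le_supI2 order_less_imp_le)
    have ne: "sup y b \<noteq> u"
    proof
      assume "sup y b = u"
      then have "inf u s = y" using iy by simp
      then show False using ys unfolding u_def by (simp add: inf.absorb2)
    qed
    show ?thesis unfolding covers_def
    proof (intro conjI notI)
      show "sup y b < u" using le ne by (rule order_le_neq_trans)
    next
      assume "\<exists>k. sup y b < k \<and> k < u"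
      then obtain k where k: "sup y b < k" "k < u" by blast
      have yk: "y \<le> inf k s" using k(1) ys by (metis le_inf_iff le_sup_iff order_less_imp_le)
      have "inf k s \<le> s" by simp
      have "inf k s \<noteq> s"
      proof
        assume "inf k s = s"
        then have "s \<le> k" by (metis inf.absorb_iff2)
        moreover have "b \<le> k" using k(1) by (metis le_sup_iff order_less_imp_le)
        ultimately have "u \<le> k" unfolding u_def by simp
        then show False using k(2) by simp
      qed
      moreover have "inf k s \<noteq> y"
      proof
        assume iks: "inf k s = y"
        have "sup (sup y b) (inf s k) = inf (sup (sup y b) s) k" by (rule modl[OF order_less_imp_le[OF k(1)]])
        moreover have "sup (sup y b) s = u" unfolding u_def using ys
          by (metis sup.absorb_iff2 sup.assoc sup.commute order_less_imp_le)
        ultimately have "sup (sup y b) y = k" using iks order_less_imp_le[OF k(2)] by (simp add: inf.commute inf.absorb1 inf.absorb2)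
        then have "sup y b = k" by (simp add: sup.absorb1)
        then show False using k(1) by simp
      qed
      ultimately have "y < inf k s \<and> inf k s < s" using yk by (simp add: order_less_le)
      then show False using y unfolding covers_def by blast
    qed
  qed
  have tu: "- s + u \<le> 0"
  proof (rule glb_low)
    fix y assume y: "covers s y"
    have "- s + u \<le> s" using covlow[OF cov_su] .
    moreover have "- s + u \<le> sup y b" using covlow[OF cov_y[OF y]] .
    ultimately have "- s + u \<le> inf (sup y b) s" by simp
    moreover have y0: "0 \<le> y" using lowcov_ge[OF y] .
    have ys: "y < s" using y unfolding covers_def by simp
    have "sup y (inf b s) = inf (sup y b) s" by (rule modl[OF order_less_imp_le[OF ys]])
    then have "inf (sup y b) s = y" using ib y0 by (simp add: sup.absorb1)
    ultimately show "- s + u \<le> y" by simp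
  qed
  define g where "g = - u + s"
  have key: "0 \<le> x + g \<and> x + g \<le> s" if "0 \<le> x" "x \<le> u" for x
  proof
    have "- s + u \<le> x" using tu that(1) by simp
    then have "- s + u + g \<le> x + g" by (rule mono_r)
    moreover have "- s + u + g = 0" unfolding g_def by (simp add: add.assoc)
    ultimately show "0 \<le> x + g" by simp
    have "x + g \<le> u + g" using that(2) by (rule mono_r)
    moreover have "u + g = s" unfolding g_def by (simp add: add.assoc[symmetric])
    ultimately show "x + g \<le> s" by simp
  qed
  define f where "f n = ((\<lambda>x. x + g) ^^ n) s" for n
  have fS: "f (Suc n) = f n + g" for n unfolding f_def by simp
  have P: "0 \<le> f n \<and> f n \<le> s \<and> f (Suc n) < f n" for n
  proof (induction n)
    case 0
    have "s + g < u + g" using su by (simp add: less_r_iff)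
    moreover have "u + g = s" unfolding g_def by (simp add: add.assoc[symmetric])
    ultimately show ?case using s0 fS[of 0] by (simp add: f_def)
  next
    case (Suc n)
    have "0 \<le> f n + g \<and> f n + g \<le> s" using key Suc su by (meson order_trans order_less_imp_le)
    moreover have "f (Suc n) + g < f n + g" using Suc by (simp add: less_r_iff)
    ultimately show ?case by (simp add: fS)
  qed
  obtain m where m: "m \<in> range f" "\<forall>x\<in>range f. \<not> x < m"
    using min_ex[of "f 0" "range f" 0] P by blast
  then obtain n where "m = f n" by blast
  then show False using m(2) P[of n] by blast
qed

lemma meetfin: "\<exists>ys. (\<forall>y\<in>set ys. covers s y) \<and> (\<forall>z. z \<le> s \<and> (\<forall>y\<in>set ys. z \<le> y) \<longrightarrow> z \<le> 0)"
proof -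
  define Q where "Q = {meetl s l | l. \<forall>y\<in>set l. covers s y}"
  have Q0: "\<forall>q\<in>Q. 0 \<le> q"
  proof
    fix q assume "q \<in> Q"
    then obtain l where l: "q = meetl s l" "\<forall>y\<in>set l. covers s y" unfolding Q_def by blast
    have "0 \<le> meetl s l" unfolding meetl_le_iff using s0 l(2) lowcov_ge by blast
    then show "0 \<le> q" using l by simp
  qed
  have "s \<in> Q" unfolding Q_def by (rule CollectI, rule exI[of _ "[]"]) simp
  then obtain m where m: "m \<in> Q" "\<forall>x\<in>Q. \<not> x < m" using min_ex Q0 by blast
  then obtain l0 where l0: "m = meetl s l0" "\<forall>y\<in>set l0. covers s y" unfolding Q_def by blast
  have "m \<le> 0"
  proof (rule glb_low)
    fix y assume y: "covers s y"
    have "inf y m \<in> Q" unfolding Q_def l0(1) using y l0(2)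
      by (intro CollectI exI[of _ "y # l0"]) simp
    then have "\<not> inf y m < m" using m(2) by blast
    then have "inf y m = m" by (simp add: order_less_le)
    then show "m \<le> y" by (metis inf.absorb_iff2)
  qed
  then show ?thesis using l0 meetl_le_iff by (metis order_trans)
qed

lemma greedy:
  assumes m0: "0 \<le> m" and ms: "m \<le> s"
  shows "(\<forall>y\<in>set ys. covers s y) \<Longrightarrow> \<exists>w. 0 \<le> w \<and> w \<le> s \<and> sup m w = s \<and> (\<forall>y\<in>set ys. inf m w \<le> y)"
proof (induction ys)
  case Nil
  show ?case using s0 ms by (intro exI[of _ s]) (simp add: sup.absorb2)
next
  case (Cons y l)
  then have y: "covers s y" and ly: "\<forall>y\<in>set l. covers s y" by auto
  obtain w where w: "0 \<le> w" "w \<le> s" "sup m w = s" "\<forall>y\<in>set l. inf m w \<le> y"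
    using Cons.IH ly by blast
  have y0: "0 \<le> y" using lowcov_ge[OF y] .
  have ys: "y < s" using y unfolding covers_def by simp
  show ?case
  proof (cases "sup m (inf y w) = s")
    case True
    show ?thesis
    proof (intro exI[of _ "inf y w"] conjI)
      show "0 \<le> inf y w" using y0 w(1) by simp
      show "inf y w \<le> s" using w(2) by (simp add: le_infI2)
      show "sup m (inf y w) = s" by (rule True)
      show "\<forall>y'\<in>set (y # l). inf m (inf y w) \<le> y'"
      proof
        fix y' assume "y' \<in> set (y # l)"
        then consider "y' = y" | "y' \<in> set l" by auto
        then show "inf m (inf y w) \<le> y'"
        proof cases
          case 1 then show ?thesis by (simp add: le_infI2)
        next
          case 2
          have "inf m (inf y w) \<le> inf m w" by (simp add: le_infI2 inf.coboundedI2)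
          then show ?thesis using w(4) 2 by (meson order_trans)
        qed
      qed
    qed
  next
    case False
    have "inf m w \<le> y"
    proof (rule ccontr)
      assume nle: "\<not> inf m w \<le> y"
      define c where "c = sup (inf m w) y"
      have yc: "y \<le> c" unfolding c_def by simp
      have cs: "c \<le> s" unfolding c_def using ms ys by (simp add: le_infI1 order_less_imp_le)
      have cy: "c \<noteq> y" unfolding c_def using nle by (metis sup.absorb_iff2 sup.commute)
      have "c = s"
      proof (rule ccontr)
        assume "c \<noteq> s"
        then have "y < c \<and> c < s" using yc cs cy by (simp add: order_less_le)
        then show False using y unfolding covers_def by blast
      qed
      have "sup (inf m w) (inf y w) = inf (sup (inf m w) y) w" by (rule modl) simp
      also have "\<dots> = w" using \<open>c = s\<close> w(2) unfolding c_def by (simp add: inf.absorb2)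
      finally have e: "sup (inf m w) (inf y w) = w" .
      have "sup (inf m w) (inf y w) \<le> sup m (inf y w)" by (rule sup_mono) simp_all
      then have "w \<le> sup m (inf y w)" using e by simp
      then have "sup m w \<le> sup m (inf y w)" by simp
      moreover have "sup m (inf y w) \<le> s" using ms w(2) by (simp add: le_infI2)
      ultimately have "sup m (inf y w) = s" using w(3) by simp
      then show False using False by simp
    qed
    then show ?thesis using w by (intro exI[of _ w]) auto
  qed
qed

lemma compl:
  assumes m0: "0 \<le> m" and ms: "m \<le> s"
  shows "\<exists>c. 0 \<le> c \<and> c \<le> s \<and> inf m c = 0 \<and> sup m c = s"
proof -
  obtain ys where ys: "\<forall>y\<in>set ys. covers s y" "\<forall>z. z \<le> s \<and> (\<forall>y\<in>set ys. z \<le> y) \<longrightarrow> z \<le> 0"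
    using meetfin by blast
  obtain w where w: "0 \<le> w" "w \<le> s" "sup m w = s" "\<forall>y\<in>set ys. inf m w \<le> y"
    using greedy[OF m0 ms ys(1)] by blast
  have "inf m w \<le> 0" using ys(2) w(4) ms by (simp add: le_infI1)
  moreover have "0 \<le> inf m w" using m0 w(1) by simp
  ultimately show ?thesis using w by (intro exI[of _ w]) auto
qed

lemma atom_below: "0 < y \<Longrightarrow> \<exists>b. covers b 0 \<and> b \<le> (y::'a)"
proof -
  assume y: "0 < y"
  have yQ: "y \<in> {z. 0 < z \<and> z \<le> y}" using y by simp
  have Q0: "\<forall>x\<in>{z. 0 < z \<and> z \<le> y}. 0 \<le> x" by (simp add: order_less_imp_le)
  obtain b where b: "b \<in> {z. 0 < z \<and> z \<le> y}" "\<forall>x\<in>{z. 0 < z \<and> z \<le> y}. \<not> x < b"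
    using min_ex[OF yQ Q0] by blast
  have b0: "0 < b" and bly: "b \<le> y" using b(1) by simp_all
  have "covers b 0" unfolding covers_def
  proof (intro conjI notI b0)
    assume "\<exists>k>0. k < b"
    then obtain k where k: "0 < k" "k < b" by blast
    have "k \<le> y" using order_less_imp_le[OF k(2)] bly by (rule order_trans)
    then have "k \<in> {z. 0 < z \<and> z \<le> y}" using k(1) by simp
    then show False using b(2) k(2) by blast
  qed
  then show ?thesis using bly by blast
qed

lemma atomistic:
  assumes x0: "0 \<le> x" and xs: "x \<le> s"
  shows "\<exists>l. (\<forall>b\<in>set l. covers b 0) \<and> joinl l = x"
proof -
  define Q where "Q = {joinl l | l. (\<forall>b\<in>set l. covers b 0) \<and> joinl l \<le> x}"
  have "0 \<in> Q" unfolding Q_def using x0 by (intro CollectI exI[of _ "[]"]) simp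
  moreover have "\<forall>q\<in>Q. q \<le> x" unfolding Q_def by blast
  ultimately obtain m where m: "m \<in> Q" "\<forall>q\<in>Q. \<not> m < q" using max_ex by blast
  then obtain l0 where l0: "m = joinl l0" "\<forall>b\<in>set l0. covers b 0" "joinl l0 \<le> x"
    unfolding Q_def by blast
  have m0: "0 \<le> m" unfolding l0(1) by (rule joinl_ge0) (use l0(2) in \<open>auto simp: covers_def\<close>)
  have mx: "m \<le> x" using l0 by simp
  have "m = x"
  proof (rule ccontr)
    assume "m \<noteq> x"
    obtain c where c: "0 \<le> c" "c \<le> s" "inf m c = 0" "sup m c = s"
      using compl[OF m0] mx xs by (meson order_trans)
    define y where "y = inf c x"
    have "inf m y = inf (inf m c) x" unfolding y_def by (simp add: inf.assoc)
    then have my: "inf m y = 0" using c(3) x0 by (simp add: inf.absorb1)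
    have "sup m y = inf (sup m c) x" unfolding y_def by (rule modl[OF mx])
    then have "sup m y = x" using c(4) xs by (simp add: inf.absorb2)
    then have "y \<noteq> 0" using \<open>m \<noteq> x\<close> m0 by (metis sup.absorb1)
    moreover have "0 \<le> y" unfolding y_def using c(1) x0 by simp
    ultimately have "0 < y" by (simp add: order_less_le)
    then obtain b where b: "covers b 0" "b \<le> y" using atom_below by blast
    have bx: "b \<le> x" using b(2) unfolding y_def by simp
    have nbm: "\<not> b \<le> m"
    proof
      assume "b \<le> m"
      then have "b \<le> inf m y" using b(2) by simp
      then have "b \<le> 0" using my by simp
      moreover have "0 < b" using b(1) unfolding covers_def by simp
      ultimately show False by simp
    qed
    have "sup b m \<in> Q" unfolding Q_def l0(1) using b(1) l0(2) bx mx l0(1)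
      by (intro CollectI exI[of _ "b # l0"]) auto
    moreover have "m < sup b m" using nbm by (metis sup.cobounded2 sup.absorb_iff2 sup.commute order_less_le)
    ultimately show False using m(2) by blast
  qed
  then show ?thesis using l0 by blast
qed

lemma Sset_eq:
  assumes at: "\<forall>b\<in>set bs. covers b 0" and js: "joinl bs = s"
    and x0: "0 \<le> x" and xy: "x \<le> y" and ys: "y \<le> s" and eq: "Sset bs x = Sset bs y"
  shows "x = y"
proof -
  have ge0: "\<forall>b\<in>set bs. 0 \<le> b" using at unfolding covers_def by (auto simp: order_less_imp_le)
  have xs: "x \<le> s" using xy ys by (rule order_trans)
  have H: "i \<le> length bs \<Longrightarrow> sup x (joinl (drop i bs)) = sup y (joinl (drop i bs))" for i
  proof (induction i)
    case 0
    show ?case using js xs ys by (simp add: sup.absorb2)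
  next
    case (Suc i)
    then have il: "i < length bs" by simp
    define c where "c = bs!i"
    define D where "D = joinl (drop (Suc i) bs)"
    have dr: "drop i bs = c # drop (Suc i) bs" unfolding c_def using il by (rule Cons_nth_drop_Suc[symmetric])
    have IH: "sup x (sup c D) = sup y (sup c D)" using Suc.IH il dr unfolding D_def by simp
    have D0: "0 \<le> D" unfolding D_def using ge0 by (intro joinl_ge0) (meson in_set_dropD)
    have cat: "covers c 0" unfolding c_def using at il by simp
    have "sup x D = sup y D"
    proof (cases "c \<le> sup x D")
      case True
      then have T2: "c \<le> sup y D" using xy by (meson order_trans sup_mono order_refl)
      have "sup x (sup c D) = sup (sup x D) c" by (simp add: ac_simps)
      also have "\<dots> = sup x D" using True by (rule sup.absorb1)
      finally have 1: "sup x (sup c D) = sup x D" .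
      have "sup y (sup c D) = sup (sup y D) c" by (simp add: ac_simps)
      also have "\<dots> = sup y D" using T2 by (rule sup.absorb1)
      finally have 2: "sup y (sup c D) = sup y D" .
      show ?thesis using IH 1 2 by simp
    next
      case False
      then have "i \<in> Sset bs x" unfolding Sset_def D_def c_def using il by simp
      then have "i \<in> Sset bs y" using eq by simp
      then have ncy: "\<not> c \<le> sup y D" unfolding Sset_def D_def c_def by simp
      have yD0: "0 \<le> sup y D" using D0 by (simp add: le_supI2)
      have ic: "inf c (sup y D) = 0" using atom_inf[OF cat yD0 ncy] .
      have le: "sup x D \<le> sup y D" using xy by (simp add: le_supI1)
      have "sup (sup x D) (inf c (sup y D)) = inf (sup (sup x D) c) (sup y D)" by (rule modl[OF le])
      moreover have "sup (sup x D) (inf c (sup y D)) = sup x D" using ic D0 by (simp add: le_supI2 sup.absorb1)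
      moreover have "sup (sup x D) c = sup (sup y D) c"
      proof -
        have "sup (sup x D) c = sup x (sup c D)" by (simp add: ac_simps)
        also have "\<dots> = sup y (sup c D)" by (rule IH)
        also have "\<dots> = sup (sup y D) c" by (simp add: ac_simps)
        finally show ?thesis .
      qed
      moreover have "inf (sup (sup y D) c) (sup y D) = sup y D" by (simp add: inf.absorb2)
      ultimately show ?thesis by simp
    qed
    then show ?case by (simp add: D_def)
  qed
  have "sup x (joinl (drop (length bs) bs)) = sup y (joinl (drop (length bs) bs))" using H[of "length bs"] by (simp only: order_refl simp_thms)
  then show ?thesis using x0 xy by (simp add: sup.absorb1)
qed

lemma finlen:
  assumes at: "\<forall>b\<in>set bs. covers b 0" and js: "joinl bs = s"
  shows "finite_length {x. 0 \<le> x \<and> x \<le> s}"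
  unfolding finite_length_def
proof (intro exI[of _ "Suc (length bs)"] allI impI)
  fix C assume C: "C \<subseteq> {x. 0 \<le> x \<and> x \<le> s}" and ch: "\<forall>x\<in>C. \<forall>y\<in>C. x \<le> y \<or> y \<le> x"
  define h where "h x = card (Sset bs x)" for x
  have fS: "finite (Sset bs x)" for x using Sset_fin finite_subset by blast
  have inj: "inj_on h C"
  proof (rule inj_onI)
    fix x y assume xC: "x \<in> C" and yC: "y \<in> C" and hh: "h x = h y"
    have gen: "a = b" if "a \<in> C" "b \<in> C" "a \<le> b" "h a = h b" for a b
    proof -
      have "Sset bs b \<subseteq> Sset bs a" using Sset_anti that(3) .
      then have "Sset bs b = Sset bs a" using fS that(4) unfolding h_def by (metis card_subset_eq)
      then show "a = b" using Sset_eq[OF at js _ that(3)] that C by auto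
    qed
    show "x = y" using ch xC yC hh gen by metis
  qed
  have img: "h ` C \<subseteq> {..length bs}"
  proof
    fix n assume "n \<in> h ` C"
    then obtain x where "n = h x" by blast
    moreover have "card (Sset bs x) \<le> card {..<length bs}" using Sset_fin by (rule card_mono[rotated]) simp
    ultimately show "n \<in> {..length bs}" unfolding h_def by simp
  qed
  have "finite (h ` C)" using img finite_subset by blast
  then show "finite C \<and> card C \<le> Suc (length bs)"
    using inj img by (metis card_atMost card_image card_mono finite_atMost finite_imageD)
qed

lemma main:
  shows "is_lub_in UNIV {g. covers g 0} s \<and> modular_geometric_lattice {x. 0 \<le> x \<and> x \<le> s} 0"
proof
  obtain bs where bs: "\<forall>b\<in>set bs. covers b 0" "joinl bs = s"
    using atomistic[OF s0 order_refl] by blast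
  show "is_lub_in UNIV {g. covers g 0} s"
    unfolding is_lub_in_def
  proof (intro conjI ballI allI impI)
    show "s \<in> UNIV" by simp
    fix y :: 'a assume "y \<in> {g. covers g 0}"
    then show "y \<le> s" using atoms_le_s by simp
  next
    fix z :: 'a assume z: "\<forall>y\<in>{g. covers g 0}. y \<le> z"
    have z0: "0 \<le> z"
    proof (cases "(X_neg::'a set) = {}")
      case True then show ?thesis using triv[OF True, of z] by simp
    next
      case False
      then obtain x :: 'a where x: "x \<in> X_neg" by blast
      then have "covers (0 + - x) (x + - x)" unfolding X_neg_def by (simp only: covers_r mem_Collect_eq)
      then have cx: "covers (- x) 0" by simp
      then have "- x \<le> z" using z by simp
      moreover have "0 < - x" using cx unfolding covers_def by simp
      ultimately show ?thesis by simp
    qed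
    show "s \<le> z" unfolding bs(2)[symmetric] using z0 z bs(1) by (intro joinl_le) auto
  qed
  show "modular_geometric_lattice {x. 0 \<le> x \<and> x \<le> s} 0"
    unfolding modular_geometric_lattice_def
  proof (intro conjI ballI)
    show "0 \<in> {x. 0 \<le> x \<and> x \<le> s}" using s0 by simp
  next
    fix x assume "x \<in> {x. 0 \<le> x \<and> x \<le> (s::'a)}"
    then show "0 \<le> x" by simp
  next
    fix x y assume "x \<in> {x. 0 \<le> x \<and> x \<le> (s::'a)}" "y \<in> {x. 0 \<le> x \<and> x \<le> s}"
    then show "sup x y \<in> {x. 0 \<le> x \<and> x \<le> s}" "inf x y \<in> {x. 0 \<le> x \<and> x \<le> s}"
      by (auto intro: le_supI1 le_infI1)
  next
    show "modular_on {x. 0 \<le> x \<and> x \<le> s}" using MOD unfolding modular_on_def by blast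
  next
    show "finite_length {x. 0 \<le> x \<and> x \<le> s}" by (rule finlen[OF bs])
  next
    fix x assume xA: "x \<in> {x. 0 \<le> x \<and> x \<le> (s::'a)}"
    then obtain l where l: "\<forall>b\<in>set l. covers b 0" "joinl l = x" using atomistic by auto
    show "\<exists>F. finite F \<and> F \<subseteq> {a \<in> {x. 0 \<le> x \<and> x \<le> s}. 0 < a \<and> \<not> (\<exists>k\<in>{x. 0 \<le> x \<and> x \<le> s}. 0 < k \<and> k < a)} \<and>
             is_lub_in {x. 0 \<le> x \<and> x \<le> s} F x"
    proof (intro exI[of _ "set l"] conjI)
      show "finite (set l)" by simp
      show "set l \<subseteq> {a \<in> {x. 0 \<le> x \<and> x \<le> s}. 0 < a \<and> \<not> (\<exists>k\<in>{x. 0 \<le> x \<and> x \<le> s}. 0 < k \<and> k < a)}"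
      proof
        fix a assume a: "a \<in> set l"
        have ca: "covers a 0" using a l(1) by simp
        have "a \<le> x" using joinl_ub[OF a] l(2) by simp
        moreover have "x \<le> s" using xA by simp
        ultimately have "a \<le> s" by (rule order_trans)
        then show "a \<in> {a \<in> {x. 0 \<le> x \<and> x \<le> s}. 0 < a \<and> \<not> (\<exists>k\<in>{x. 0 \<le> x \<and> x \<le> s}. 0 < k \<and> k < a)}"
          using ca unfolding covers_def by (auto simp: order_less_imp_le)
      qed
      show "is_lub_in {x. 0 \<le> x \<and> x \<le> s} (set l) x"
        unfolding is_lub_in_def
      proof (intro conjI ballI impI)
        show "x \<in> {x. 0 \<le> x \<and> x \<le> s}" by (rule xA)
        fix y assume "y \<in> set l" then show "y \<le> x" using joinl_ub l(2) by metis
      next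
        fix z assume "z \<in> {x. 0 \<le> x \<and> x \<le> (s::'a)}" "\<forall>y\<in>set l. y \<le> z"
        then show "x \<le> z" unfolding l(2)[symmetric] by (intro joinl_le) auto
      qed
    qed
  qed
qed

end

theorem mainTheorem10:
  fixes s :: "'a::{group_add,lattice}"
  assumes "right_invariant TYPE('a)"
    and "modular_on (UNIV :: 'a set)"
    and "noetherian TYPE('a)"
    and "is_glb_in UNIV X_neg (- s)"
  shows "is_lub_in UNIV {g. covers g 0} s \<and> modular_geometric_lattice {x. 0 \<le> x \<and> x \<le> s} 0"
proof -
  interpret rlg s using assms by unfold_locales
  show ?thesis by (rule main)
qed

end
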